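(* Let $H$ be a diagonal Hamiltonian on $n$ qubits with real diagonal entries $H_{z,z}$, $z\in\{0,1\}^n$. Let $\delta:=\max_{\ell\in\mathbb{R}}|\{z\in\{0,1\}^n: H_{z,z}=\ell\}|/2^n$. Fix arbitrary real parameters $\beta_1,\gamma_1,\beta_2,\gamma_2,\dots$, and for $p\ge 0$ let $\ket{\psi_p}=\sum_z \alpha_{p,z}\ket{z}$ be the QAOA state of depth $p$, $$\ket{\psi_p}=\Big[\prod_{i=1}^{p}U_B(\beta_i)U_C(\gamma_i)\Big]\mathrm{Had}^{\otimes n}\ket{0}^{\otimes n},$$ where $U_C(\gamma)=e^{-i\gamma H}$, $U_B(\beta)=e^{-i\beta\sum_{k=1}^n\sigma_X^k}=(e^{-i\beta\sigma_X})^{\otimes n}$, $\mathrm{Had}$ is the Hadamard gate, and the product is ordered so that $U_B(\beta_1)U_C(\gamma_1)$ is applied first. For $p\ge0$ let $\Delta_p:=\min_{t\le p}\max_{u\in\mathbb{C}}|\{z\in\{0,1\}^n:\alpha_{t,z}=u\}|/2^n$. Then $\Delta_0=1$, and for every $p\ge1$ and every $z\in\{0,1\}^n$, $$|\alpha_{p,z}|\le\big(2^{n+1}(2-\Delta_{p-1}-\delta)+1\big)^{p}\,\frac{1}{\sqrt{2^n}}.$$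
   Context: $\sigma_X^k$ denotes the Pauli X matrix $\begin{pmatrix}0&1\\1&0\end{pmatrix}$ acting on qubit $k$. $\delta$ is the maximum fraction of computational basis states sharing the same diagonal value of $H$; $\Delta_p$ is the minimum over depths $t\le p$ of the maximum fraction of amplitudes of $\ket{\psi_t}$ that are all equal to a common complex value. *)

theory Defs
  imports "HOL-Analysis.Analysis"
begin

definition bitstrings :: "nat \<Rightarrow> bool list set" where
  "bitstrings n = {z. length z = n}"

type_synonym state = "bool list \<Rightarrow> complex"

text \<open>Phase separator U_C(gamma) = exp(-i gamma H), H diagonal with entries H z.\<close>
definition U_C :: "(bool list \<Rightarrow> real) \<Rightarrow> real \<Rightarrow> state \<Rightarrow> state" where
  "U_C H g \<psi> = (\<lambda>z. cis (- g * H z) * \<psi> z)"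

text \<open>Single-qubit gate exp(-i beta sigma_X) = cos beta I - i sin beta sigma_X, matrix entry (a,b).\<close>
definition RX :: "real \<Rightarrow> bool \<Rightarrow> bool \<Rightarrow> complex" where
  "RX b x y = (if x = y then complex_of_real (cos b) else - \<i> * complex_of_real (sin b))"

text \<open>Mixer U_B(beta) = (exp(-i beta sigma_X)) tensor-power n, acting on states of n qubits.\<close>
definition U_B :: "nat \<Rightarrow> real \<Rightarrow> state \<Rightarrow> state" where
  "U_B n b \<psi> = (\<lambda>z. \<Sum>w\<in>bitstrings n. (\<Prod>k<n. RX b (z ! k) (w ! k)) * \<psi> w)"

text \<open>QAOA amplitudes alpha_{p,z}; psi_0 = Had^n |0...0>, psi_p = U_B(beta_p) U_C(gamma_p) psi_{p-1}.\<close>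
fun qaoa :: "nat \<Rightarrow> (bool list \<Rightarrow> real) \<Rightarrow> (nat \<Rightarrow> real) \<Rightarrow> (nat \<Rightarrow> real) \<Rightarrow> nat \<Rightarrow> state" where
  "qaoa n H beta gamma 0 = (\<lambda>z. complex_of_real (1 / sqrt (2 ^ n)))"
| "qaoa n H beta gamma (Suc p) =
     U_B n (beta (Suc p)) (U_C H (gamma (Suc p)) (qaoa n H beta gamma p))"

definition delta :: "nat \<Rightarrow> (bool list \<Rightarrow> real) \<Rightarrow> real" where
  "delta n H = (SUP l::real. real (card {z \<in> bitstrings n. H z = l}) / 2 ^ n)"

definition Delta :: "nat \<Rightarrow> (bool list \<Rightarrow> real) \<Rightarrow> (nat \<Rightarrow> real) \<Rightarrow> (nat \<Rightarrow> real) \<Rightarrow> nat \<Rightarrow> real" where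
  "Delta n H beta gamma p = Min ((\<lambda>t. SUP u::complex.
      real (card {z \<in> bitstrings n. qaoa n H beta gamma t z = u}) / 2 ^ n) ` {..p})"

end

theory Submission imports Defs begin

lemma finite_bs: "finite (bitstrings n)"
  using finite_lists_length_eq[of "UNIV::bool set" n] unfolding bitstrings_def by simp

lemma card_bs: "card (bitstrings n) = 2 ^ n"
  using card_lists_length_eq[of "UNIV::bool set" n] unfolding bitstrings_def by simp

lemma frac_le1: "real (card {z \<in> bitstrings n. g z = u}) / 2 ^ n \<le> 1"
proof -
  have "card {z \<in> bitstrings n. g z = u} \<le> card (bitstrings n)"
    by (rule card_mono[OF finite_bs]) auto
  then show ?thesis by (simp add: card_bs)
qed

lemma frac_range_finite:
  "finite (range (\<lambda>u. real (card {z \<in> bitstrings n. g z = u}) / 2 ^ n))"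
proof (rule finite_subset)
  show "range (\<lambda>u. real (card {z \<in> bitstrings n. g z = u}) / 2 ^ n)
      \<subseteq> (\<lambda>k. real k / 2 ^ n) ` {..card (bitstrings n)}"
  proof
    fix x assume "x \<in> range (\<lambda>u. real (card {z \<in> bitstrings n. g z = u}) / 2 ^ n)"
    then obtain u where x: "x = real (card {z \<in> bitstrings n. g z = u}) / 2 ^ n" by auto
    have "card {z \<in> bitstrings n. g z = u} \<le> card (bitstrings n)"
      by (rule card_mono[OF finite_bs]) auto
    then show "x \<in> (\<lambda>k. real k / 2 ^ n) ` {..card (bitstrings n)}" using x by auto
  qed
qed auto

lemma sup_attained:
  fixes f :: "'a \<Rightarrow> real"
  assumes "finite (range f)"
  shows "\<exists>x. (SUP x. f x) = f x"
proof -
  have "Sup (range f) = Max (range f)" using assms by (simp add: cSup_eq_Max)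
  moreover have "Max (range f) \<in> range f" using assms by (intro Max_in) auto
  ultimately show ?thesis by auto
qed

lemma frac_sup_le1: "(SUP u. real (card {z \<in> bitstrings n. g z = u}) / 2 ^ n) \<le> 1"
  by (rule cSUP_least) (auto simp: frac_le1)

lemma frac_sup_attained:
  "\<exists>u. (SUP u. real (card {z \<in> bitstrings n. g z = u}) / 2 ^ n)
        = real (card {z \<in> bitstrings n. g z = u}) / 2 ^ n"
  by (rule sup_attained[OF frac_range_finite])

lemma frac_sup_upper: "real (card {z \<in> bitstrings n. g z = u}) / 2 ^ n
   \<le> (SUP u. real (card {z \<in> bitstrings n. g z = u}) / 2 ^ n)"
  by (rule cSUP_upper) (auto intro: bdd_above_finite[OF frac_range_finite])

lemma delta_le1: "delta n H \<le> 1"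
  unfolding delta_def by (rule frac_sup_le1)

lemma Delta_le1: "Delta n H beta gamma p \<le> 1"
proof -
  have "Delta n H beta gamma p \<le> (SUP u::complex.
      real (card {z \<in> bitstrings n. qaoa n H beta gamma p z = u}) / 2 ^ n)"
    unfolding Delta_def by (rule Min_le) auto
  also have "\<dots> \<le> 1" by (rule frac_sup_le1)
  finally show ?thesis .
qed

lemma Delta0: "Delta n H beta gamma 0 = 1"
proof -
  let ?c = "complex_of_real (1 / sqrt (2 ^ n))"
  have "Delta n H beta gamma 0 = (SUP u::complex.
      real (card {z \<in> bitstrings n. qaoa n H beta gamma 0 z = u}) / 2 ^ n)"
    unfolding Delta_def by simp
  also have "\<dots> = 1"
  proof (rule antisym[OF frac_sup_le1])
    have "real (card {z \<in> bitstrings n. qaoa n H beta gamma 0 z = ?c}) / 2 ^ n = 1"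
      by (simp add: card_bs)
    then show "1 \<le> (SUP u::complex.
      real (card {z \<in> bitstrings n. qaoa n H beta gamma 0 z = u}) / 2 ^ n)"
      using frac_sup_upper[of n "qaoa n H beta gamma 0" ?c] by linarith
  qed
  finally show ?thesis .
qed

lemma sum_prod_bs:
  fixes g :: "nat \<Rightarrow> bool \<Rightarrow> complex"
  shows "(\<Sum>w\<in>bitstrings n. \<Prod>k<n. g k (w ! k)) = (\<Prod>k<n. g k True + g k False)"
proof (induction n arbitrary: g)
  case 0
  have "bitstrings 0 = {[]}" by (auto simp: bitstrings_def)
  then show ?case by simp
next
  case (Suc n)
  have bs: "bitstrings (Suc n) = (\<lambda>(b,w). b # w) ` (UNIV \<times> bitstrings n)"
    by (auto simp: bitstrings_def image_iff length_Suc_conv)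
  have inj: "inj_on (\<lambda>(b,w). b # w) (UNIV \<times> bitstrings n)"
    by (auto simp: inj_on_def)
  have "(\<Sum>w\<in>bitstrings (Suc n). \<Prod>k<Suc n. g k (w ! k))
      = (\<Sum>(b,w)\<in>UNIV \<times> bitstrings n. \<Prod>k<Suc n. g k ((b # w) ! k))"
    unfolding bs by (subst sum.reindex[OF inj]) (simp add: case_prod_unfold)
  also have "\<dots> = (\<Sum>(b,w)\<in>UNIV \<times> bitstrings n. g 0 b * (\<Prod>k<n. g (Suc k) (w ! k)))"
    by (rule sum.cong) (auto simp only: prod.lessThan_Suc_shift nth_Cons_0 nth_Cons_Suc)
  also have "\<dots> = (\<Sum>b\<in>UNIV. \<Sum>w\<in>bitstrings n. g 0 b * (\<Prod>k<n. g (Suc k) (w ! k)))"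
    by (simp add: sum.cartesian_product)
  also have "\<dots> = (\<Sum>b\<in>UNIV. g 0 b * (\<Prod>k<n. g (Suc k) True + g (Suc k) False))"
    by (simp add: sum_distrib_left[symmetric] Suc.IH[of "\<lambda>k. g (Suc k)"])
  also have "\<dots> = (\<Prod>k<Suc n. g k True + g k False)"
    by (simp only: prod.lessThan_Suc_shift UNIV_bool) (simp add: algebra_simps)
  finally show ?case .
qed


lemma norm_RX: "cmod (RX b x y) \<le> 1"
  by (auto simp: RX_def norm_mult abs_cos_le_one abs_sin_le_one)

lemma RX_sum: "RX b x True + RX b x False = Complex (cos b) (- sin b)"
  by (cases x) (auto simp: RX_def complex_eq_iff)

lemma norm_RX_sum: "cmod (RX b x True + RX b x False) = 1"
  by (simp add: RX_sum cmod_def)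

lemma bs_nonempty: "replicate n True \<in> bitstrings n"
  by (simp add: bitstrings_def)

lemma step:
  assumes K: "\<forall>z\<in>bitstrings n. cmod (qaoa n H beta gamma j z) \<le> K"
  shows "\<forall>z\<in>bitstrings n. cmod (qaoa n H beta gamma (Suc j) z)
     \<le> K * (2 ^ (n + 1) * (2 - Delta n H beta gamma j - delta n H) + 1)"
proof
  fix z assume z: "z \<in> bitstrings n"
  define \<psi> where "\<psi> = qaoa n H beta gamma j"
  define \<phi> where "\<phi> = U_C H (gamma (Suc j)) \<psi>"
  define b where "b = beta (Suc j)"
  define bs where "bs = bitstrings n"
  have fbs: "finite bs" by (simp add: bs_def finite_bs)
  have K0: "0 \<le> K" using K bs_nonempty[of n] norm_ge_zero order_trans by blast
  obtain u0 where u0: "(SUP u. real (card {z \<in> bitstrings n. \<psi> z = u}) / 2 ^ n)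
        = real (card {z \<in> bitstrings n. \<psi> z = u0}) / 2 ^ n"
    using frac_sup_attained[of n \<psi>] by blast
  obtain l0 where l0: "(SUP l. real (card {z \<in> bitstrings n. H z = l}) / 2 ^ n)
        = real (card {z \<in> bitstrings n. H z = l0}) / 2 ^ n"
    using frac_sup_attained[of n H] by blast
  define A where "A = {z \<in> bitstrings n. \<psi> z = u0}"
  define B where "B = {z \<in> bitstrings n. H z = l0}"
  define S where "S = bs - A \<inter> B"
  have hA: "Delta n H beta gamma j * 2 ^ n \<le> real (card A)"
  proof -
    have "Delta n H beta gamma j \<le> (SUP u. real (card {z \<in> bitstrings n. \<psi> z = u}) / 2 ^ n)"
      unfolding Delta_def \<psi>_def by (rule Min_le) auto
    then show ?thesis using u0 by (simp add: A_def field_simps)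
  qed
  have hB: "delta n H * 2 ^ n \<le> real (card B)"
    using l0 by (simp add: delta_def B_def field_simps)
  have AB: "A \<subseteq> bs" "B \<subseteq> bs" by (auto simp: A_def B_def bs_def)
  have fA: "finite A" "finite B" using AB fbs finite_subset by auto
  have cS: "card S = card bs - card (A \<inter> B)"
    unfolding S_def using AB fA by (intro card_Diff_subset) auto
  have "card (A \<union> B) + card (A \<inter> B) = card A + card B" using fA by (rule card_Un_Int[symmetric])
  moreover have "card (A \<union> B) \<le> card bs" using AB fbs by (intro card_mono) auto
  moreover have "card (A \<inter> B) \<le> card bs" using AB fbs by (intro card_mono) auto
  ultimately have "real (card S) \<le> 2 * real (card bs) - real (card A) - real (card B)"
    using cS by linarith
  also have "\<dots> \<le> 2 ^ n * (2 - Delta n H beta gamma j - delta n H)"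
    using hA hB by (simp add: bs_def card_bs algebra_simps)
  finally have hS: "real (card S) \<le> 2 ^ n * (2 - Delta n H beta gamma j - delta n H)" .
  define c where "c = (if A \<inter> B = {} then 0 else cis (- gamma (Suc j) * l0) * u0)"
  have hc: "cmod c \<le> K"
  proof (cases "A \<inter> B = {}")
    case True then show ?thesis using K0 by (simp add: c_def)
  next
    case False
    then obtain z0 where "z0 \<in> A \<inter> B" by blast
    then have "\<psi> z0 = u0" "z0 \<in> bitstrings n" by (auto simp: A_def)
    then show ?thesis using K False by (auto simp: c_def norm_mult \<psi>_def)
  qed
  have hphi: "\<phi> w = c" if "w \<in> bs - S" for w
    using that by (auto simp: S_def A_def B_def c_def \<phi>_def U_C_def)
  have hphiK: "cmod (\<phi> w) \<le> K" if "w \<in> bs" for w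
    using that K by (auto simp: \<phi>_def U_C_def norm_mult \<psi>_def bs_def)
  define P where "P w = (\<Prod>k<n. RX b (z ! k) (w ! k))" for w
  have normP: "cmod (P w) \<le> 1" for w
    unfolding P_def prod_norm[symmetric] by (rule prod_le_1) (auto simp: norm_RX)
  have sumP: "cmod (\<Sum>w\<in>bs. P w) = 1"
  proof -
    have "(\<Sum>w\<in>bs. P w) = (\<Prod>k<n. RX b (z ! k) True + RX b (z ! k) False)"
      unfolding P_def bs_def by (rule sum_prod_bs[of "\<lambda>k y. RX b (z ! k) y"])
    then show ?thesis by (simp add: prod_norm[symmetric] norm_RX_sum)
  qed
  have eq: "qaoa n H beta gamma (Suc j) z = (\<Sum>w\<in>bs. P w * \<phi> w)"
    by (simp add: U_B_def P_def \<phi>_def \<psi>_def b_def bs_def)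
  also have "\<dots> = c * (\<Sum>w\<in>bs. P w) + (\<Sum>w\<in>bs. P w * (\<phi> w - c))"
    by (simp add: sum_distrib_left sum.distrib[symmetric] algebra_simps)
  also have "(\<Sum>w\<in>bs. P w * (\<phi> w - c)) = (\<Sum>w\<in>S. P w * (\<phi> w - c))"
    by (rule sum.mono_neutral_right[OF fbs]) (auto simp: S_def hphi)
  finally have eq2: "qaoa n H beta gamma (Suc j) z
      = c * (\<Sum>w\<in>bs. P w) + (\<Sum>w\<in>S. P w * (\<phi> w - c))" .
  have n1: "cmod (c * (\<Sum>w\<in>bs. P w)) \<le> K" using hc sumP by (simp add: norm_mult)
  have "cmod (\<Sum>w\<in>S. P w * (\<phi> w - c)) \<le> (\<Sum>w\<in>S. cmod (P w * (\<phi> w - c)))"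
    by (rule norm_sum)
  also have "\<dots> \<le> (\<Sum>w\<in>S. 2 * K)"
  proof (rule sum_mono)
    fix w assume w: "w \<in> S"
    then have "w \<in> bs" by (simp add: S_def)
    then have "cmod (\<phi> w - c) \<le> 2 * K"
      using hphiK[of w] hc norm_triangle_ineq4[of "\<phi> w" c] by linarith
    moreover have "cmod (P w) \<le> 1" by (rule normP)
    ultimately show "cmod (P w * (\<phi> w - c)) \<le> 2 * K"
      unfolding norm_mult using K0
      by (metis mult_le_one mult_mono norm_ge_zero mult_1 order_trans mult.commute)
  qed
  also have "\<dots> = 2 * K * real (card S)" by simp
  also have "\<dots> \<le> 2 * K * (2 ^ n * (2 - Delta n H beta gamma j - delta n H))"
    using hS K0 by (intro mult_left_mono) auto
  finally have n2: "cmod (\<Sum>w\<in>S. P w * (\<phi> w - c))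
     \<le> 2 * K * (2 ^ n * (2 - Delta n H beta gamma j - delta n H))" .
  have "cmod (qaoa n H beta gamma (Suc j) z) \<le> K + 2 * K * (2 ^ n * (2 - Delta n H beta gamma j - delta n H))"
    unfolding eq2 using n1 n2 norm_triangle_ineq[of "c * (\<Sum>w\<in>bs. P w)" "\<Sum>w\<in>S. P w * (\<phi> w - c)"]
    by linarith
  also have "\<dots> = K * (2 ^ (n + 1) * (2 - Delta n H beta gamma j - delta n H) + 1)"
    by (simp add: algebra_simps)
  finally show "cmod (qaoa n H beta gamma (Suc j) z)
     \<le> K * (2 ^ (n + 1) * (2 - Delta n H beta gamma j - delta n H) + 1)" .
qed


lemma Delta_mono: "j \<le> q \<Longrightarrow> Delta n H beta gamma q \<le> Delta n H beta gamma j"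
  unfolding Delta_def by (rule Min_antimono) auto

theorem proposition2:
  fixes n :: nat and H :: "bool list \<Rightarrow> real" and beta gamma :: "nat \<Rightarrow> real"
  shows "Delta n H beta gamma 0 = 1 \<and>
    (\<forall>p\<ge>1. \<forall>z\<in>bitstrings n.
      cmod (qaoa n H beta gamma p z)
        \<le> (2 ^ (n + 1) * (2 - Delta n H beta gamma (p - 1) - delta n H) + 1) ^ p
           * (1 / sqrt (2 ^ n)))"
proof (intro conjI allI impI ballI)
  show "Delta n H beta gamma 0 = 1" by (rule Delta0)
next
  fix p :: nat and z assume p: "1 \<le> p" and z: "z \<in> bitstrings n"
  define B where "B = 2 ^ (n + 1) * (2 - Delta n H beta gamma (p - 1) - delta n H) + (1::real)"
  have B0: "0 \<le> B" unfolding B_def using Delta_le1[of n H beta gamma "p - 1"] delta_le1[of n H]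
    by (intro add_nonneg_nonneg mult_nonneg_nonneg) auto
  have "\<forall>z\<in>bitstrings n. cmod (qaoa n H beta gamma j z) \<le> B ^ j * (1 / sqrt (2 ^ n))"
    if "j \<le> p" for j
    using that
  proof (induction j)
    case 0 then show ?case by (simp add: norm_divide)
  next
    case (Suc j)
    define K where "K = B ^ j * (1 / sqrt (2 ^ n))"
    have K0: "0 \<le> K" unfolding K_def using B0 by simp
    have IH: "\<forall>z\<in>bitstrings n. cmod (qaoa n H beta gamma j z) \<le> K"
      using Suc by (simp add: K_def)
    have Bj: "2 ^ (n + 1) * (2 - Delta n H beta gamma j - delta n H) + 1 \<le> B"
      unfolding B_def using Delta_mono[of j "p - 1" n H beta gamma] Suc.prems by simp
    show ?case
    proof
      fix z assume "z \<in> bitstrings n"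
      then have "cmod (qaoa n H beta gamma (Suc j) z)
         \<le> K * (2 ^ (n + 1) * (2 - Delta n H beta gamma j - delta n H) + 1)"
        using step[OF IH] by blast
      also have "\<dots> \<le> K * B" using mult_left_mono[OF Bj K0] .
      also have "\<dots> = B ^ Suc j * (1 / sqrt (2 ^ n))" by (simp add: K_def algebra_simps)
      finally show "cmod (qaoa n H beta gamma (Suc j) z) \<le> B ^ Suc j * (1 / sqrt (2 ^ n))" .
    qed
  qed
  then show "cmod (qaoa n H beta gamma p z)
        \<le> (2 ^ (n + 1) * (2 - Delta n H beta gamma (p - 1) - delta n H) + 1) ^ p
           * (1 / sqrt (2 ^ n))" using z by (simp add: B_def)
qed

end
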